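(* For every $n\in\mathbb Z$ and every $j\in\{0,1,\dots,r+1\}$, $$c_j=Z_j^{(G_r)}\bigl(y_{1,n},y_{2,n},\dots,y_{2r+1,n}\bigr),$$ where $c_j$ are the conserved quantities defined below. In particular, taking $n=0$, $c_j$ is the $j$-particle hard particle partition function on $G_r$ with vertex weights $y_{2\alpha-1}=\frac{R_{\alpha-1,0}R_{\alpha,1}}{R_{\alpha,0}R_{\alpha-1,1}}$ ($1\le\alpha\le r+1$) and $y_{2\alpha}=\frac{R_{\alpha-1,0}R_{\alpha+1,1}}{R_{\alpha,0}R_{\alpha,1}}$ ($1\le\alpha\le r$).
   Context: Fix $r\ge1$, $I_r=\{1,\dots,r\}$. Let $R_{1,0},\dots,R_{r,0},R_{1,1},\dots,R_{r,1}$ be algebraically independent indeterminates over $\mathbb Q$ and $(R_{\alpha,n})_{0\le\alpha\le r+1,n\in\mathbb Z}$ the $A_r$ $Q$-system: the unique family of nonzero elements of $\mathbb Q(R_{1,0},\dots,R_{r,1})$ with these initial values, $R_{0,n}=R_{r+1,n}=1$, and $R_{\alpha,n+1}R_{\alpha,n-1}=R_{\alpha,n}^2+R_{\alpha+1,n}R_{\alpha-1,n}$ ($\alpha\in I_r$, $n\in\mathbb Z$). Conserved quantities: for $k\in\{0,\dots,r+1\}$, $c_k$ is the determinant of the matrix obtained from the $(r+2)\times(r+2)$ matrix $(R_{1,n+i+j-r-3})_{1\le i,j\le r+2}$ by deleting row $r+2$ and column $r+2-k$; this is independent of $n$. Weights: $y_{2\alpha-1,n}=\frac{R_{\alpha-1,n}R_{\alpha,n+1}}{R_{\alpha,n}R_{\alpha-1,n+1}}$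 for $1\le\alpha\le r+1$ and $y_{2\alpha,n}=\frac{R_{\alpha-1,n}R_{\alpha+1,n+1}}{R_{\alpha,n}R_{\alpha,n+1}}$ for $1\le\alpha\le r$. The graph $G_r$ has vertices $1,\dots,2r+1$ and edges $\{1,2\}$, $\{2k,2k+1\}$ for $1\le k\le r$, and $\{2k-2,2k\}$, $\{2k-1,2k\}$ for $2\le k\le r$. A hard particle configuration on a graph is a set of vertices no two of which are joined by an edge. Given vertex weights $y_1,\dots,y_{2r+1}$, the weight of a configuration $C$ is $\prod_{i\in C}y_i$; $Z_j^{(G_r)}(y_1,\dots,y_{2r+1})$ denotes the sum of the weights of all hard particle configurations on $G_r$ of cardinality $j$. *)

theory Defs
  imports "Jordan_Normal_Form.Determinant" "HOL-Library.Poly_Mapping"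
begin

text \<open>Algebraic independence over the rationals of the family x indexed by I:
  every rational polynomial (coefficients indexed by monomials, which are finitely
  supported exponent maps with variables in I) vanishing at x is zero.\<close>
definition alg_indep_rat :: "'i set \<Rightarrow> ('i \<Rightarrow> 'a::field_char_0) \<Rightarrow> bool" where
  "alg_indep_rat I x \<longleftrightarrow>
     (\<forall>p :: ('i \<Rightarrow>\<^sub>0 nat) \<Rightarrow>\<^sub>0 rat.
        (\<forall>m\<in>Poly_Mapping.keys p. Poly_Mapping.keys m \<subseteq> I) \<and>
        (\<Sum>m\<in>Poly_Mapping.keys p. of_rat (Poly_Mapping.lookup p m) * (\<Prod>i\<in>Poly_Mapping.keys (m :: 'i \<Rightarrow>\<^sub>0 nat). x i ^ Poly_Mapping.lookup m i)) = 0
        \<longrightarrow> p = 0)"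

definition is_Q_system :: "nat \<Rightarrow> (nat \<Rightarrow> int \<Rightarrow> 'a::field) \<Rightarrow> bool" where
  "is_Q_system r R \<longleftrightarrow>
     (\<forall>n. R 0 n = 1 \<and> R (r + 1) n = 1) \<and>
     (\<forall>\<alpha>\<in>{1..r}. \<forall>n. R \<alpha> n \<noteq> 0) \<and>
     (\<forall>\<alpha>\<in>{1..r}. \<forall>n. R \<alpha> (n + 1) * R \<alpha> (n - 1) = (R \<alpha> n)\<^sup>2 + R (\<alpha> + 1) n * R (\<alpha> - 1) n)"

text \<open>Conserved quantity c_k: the (r+2)x(r+2) matrix (R_{1,n+i+j-r-3})_{1<=i,j<=r+2}
  (here 0-based indices i' = i-1, j' = j-1) with row r+2 and column r+2-k deleted
  (0-based: row r+1, column r+1-k).\<close>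
definition cons_qty :: "nat \<Rightarrow> (nat \<Rightarrow> int \<Rightarrow> 'a::field) \<Rightarrow> nat \<Rightarrow> int \<Rightarrow> 'a" where
  "cons_qty r R k n =
     det (mat_delete
            (mat (r + 2) (r + 2) (\<lambda>(i, j). R 1 (n + (int i + 1) + (int j + 1) - int r - 3)))
            (r + 1) (r + 1 - k))"

definition yw :: "(nat \<Rightarrow> int \<Rightarrow> 'a::field) \<Rightarrow> nat \<Rightarrow> int \<Rightarrow> 'a" where
  "yw R v n =
     (if odd v then
        (let \<alpha> = (v + 1) div 2 in
           R (\<alpha> - 1) n * R \<alpha> (n + 1) / (R \<alpha> n * R (\<alpha> - 1) (n + 1)))
      else
        (let \<alpha> = v div 2 in
           R (\<alpha> - 1) n * R (\<alpha> + 1) (n + 1) / (R \<alpha> n * R \<alpha> (n + 1))))"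

definition G_vertices :: "nat \<Rightarrow> nat set" where
  "G_vertices r = {1..2 * r + 1}"

definition G_edges :: "nat \<Rightarrow> nat set set" where
  "G_edges r = {{1, 2}}
     \<union> {{2 * k, 2 * k + 1} | k. 1 \<le> k \<and> k \<le> r}
     \<union> {{2 * k - 2, 2 * k} | k. 2 \<le> k \<and> k \<le> r}
     \<union> {{2 * k - 1, 2 * k} | k. 2 \<le> k \<and> k \<le> r}"

definition hard_particle_config :: "'v set \<Rightarrow> 'v set set \<Rightarrow> 'v set \<Rightarrow> bool" where
  "hard_particle_config V E C \<longleftrightarrow> C \<subseteq> V \<and> (\<forall>e\<in>E. \<not> e \<subseteq> C)"

definition Z_hp :: "'v set \<Rightarrow> 'v set set \<Rightarrow> nat \<Rightarrow> ('v \<Rightarrow> 'a::comm_ring_1) \<Rightarrow> 'a" where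
  "Z_hp V E j w = (\<Sum>C\<in>{C. hard_particle_config V E C \<and> card C = j}. \<Prod>i\<in>C. w i)"

end

theory Submission
  imports Defs
begin

lemma det_col_single:
  fixes A :: "'a::comm_ring_1 mat"
  assumes A: "A \<in> carrier_mat n n" and j: "j < n" and i0: "i0 < n"
    and z: "\<And>i. i < n \<Longrightarrow> i \<noteq> i0 \<Longrightarrow> A $$ (i,j) = 0"
  shows "det A = A $$ (i0,j) * cofactor A i0 j"
proof -
  have "det A = (\<Sum>i<n. A $$ (i,j) * cofactor A i j)" by (rule laplace_expansion_column[OF A j])
  also have "\<dots> = (\<Sum>i<n. if i = i0 then A $$ (i0,j) * cofactor A i0 j else 0)"
    by (rule sum.cong) (auto simp: z)
  also have "\<dots> = A $$ (i0,j) * cofactor A i0 j" using i0 by simp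
  finally show ?thesis .
qed

lemma neg1_pow_double[simp]: "(-1::'a::comm_ring_1)^(m+m) = 1"
  by (metis mult_2 neg_one_even_power even_mult_iff even_numeral)

lemma det_2:
  fixes E :: "'a::comm_ring_1 mat"
  assumes E: "E \<in> carrier_mat 2 2"
  shows "det E = E $$ (0,0) * E $$ (1,1) - E $$ (0,1) * E $$ (1,0)"
proof -
  have "det E = (\<Sum>i<2. E $$ (i,0) * cofactor E i 0)" by (rule laplace_expansion_column[OF E]) auto
  also have "\<dots> = E $$ (0,0) * cofactor E 0 0 + E $$ (1,0) * cofactor E 1 0"
    by (simp add: numeral_2_eq_2)
  also have "cofactor E 0 0 = E $$ (1,1)" unfolding cofactor_def
    by (subst det_single) (use E in \<open>auto simp: mat_delete_def\<close>)
  also have "cofactor E 1 0 = - E $$ (0,1)" unfolding cofactor_def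
    by (subst det_single) (use E in \<open>auto simp: mat_delete_def\<close>)
  finally show ?thesis by (simp add: algebra_simps)
qed

lemma det_mid_unit:
  fixes E :: "'a::comm_ring_1 mat"
  assumes "E \<in> carrier_mat (Suc (Suc k)) (Suc (Suc k))"
    and "\<And>i j. i < Suc (Suc k) \<Longrightarrow> 0 < j \<Longrightarrow> j < Suc k \<Longrightarrow> E $$ (i,j) = (if i = j then 1 else 0)"
  shows "det E = E $$ (0,0) * E $$ (Suc k, Suc k) - E $$ (0, Suc k) * E $$ (Suc k, 0)"
using assms proof (induction k arbitrary: E)
  case 0 then show ?case using det_2[of E] by (simp add: numeral_2_eq_2)
next
  case (Suc k)
  let ?E' = "mat_delete E 1 1"
  have "det E = E $$ (1,1) * cofactor E 1 1"
    by (rule det_col_single[OF Suc.prems(1)]) (auto simp: Suc.prems(2))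
  hence "det E = det ?E'" using Suc.prems(2)[of 1 1] by (simp add: cofactor_def)
  also have "det ?E' = ?E' $$ (0,0) * ?E' $$ (Suc k, Suc k) - ?E' $$ (0, Suc k) * ?E' $$ (Suc k, 0)"
    by (rule Suc.IH) (use Suc.prems in \<open>auto simp: mat_delete_def\<close>)
  finally show ?case using Suc.prems(1) by (simp add: mat_delete_def)
qed

lemma desn_adj:
  fixes A :: "'a::comm_ring_1 mat"
  assumes A: "A \<in> carrier_mat (Suc (Suc k)) (Suc (Suc k))"
  shows "det A * (det (mat_delete A 0 0) * det (mat_delete A (Suc k) (Suc k))
           - det (mat_delete A 0 (Suc k)) * det (mat_delete A (Suc k) 0))
         = det A * det A * det (mat_delete (mat_delete A (Suc k) (Suc k)) 0 0)"
proof -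
  define N where "N = Suc (Suc k)"
  define L where "L = Suc k"
  define C where "C = adj_mat A"
  have C: "C \<in> carrier_mat N N" unfolding C_def N_def using adj_mat(1)[OF A] .
  have AC: "A * C = det A \<cdot>\<^sub>m 1\<^sub>m N" unfolding C_def N_def using adj_mat(2)[OF A] .
  define E where "E = mat N N (\<lambda>(i,j). if j = 0 \<or> j = L then C $$ (i,j) else if i = j then 1 else 0)"
  have E: "E \<in> carrier_mat N N" unfolding E_def by simp
  have A': "A \<in> carrier_mat N N" using A unfolding N_def .
  define F where "F = mat N N (\<lambda>(i,j). if j = 0 \<or> j = L then (if i = j then det A else 0) else A $$ (i,j))"
  have AE: "A * E = F"
  proof (rule eq_matI)
    fix i j assume i: "i < dim_row F" and j: "j < dim_col F"
    hence i: "i < N" and j: "j < N" unfolding F_def by auto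
    have "(A * E) $$ (i,j) = (\<Sum>l\<in>{0..<N}. A $$ (i,l) * E $$ (l,j))"
      using A' E i j by (simp add: scalar_prod_def)
    also have "\<dots> = F $$ (i,j)"
    proof (cases "j = 0 \<or> j = L")
      case True
      have "(\<Sum>l\<in>{0..<N}. A $$ (i,l) * E $$ (l,j)) = (\<Sum>l\<in>{0..<N}. A $$ (i,l) * C $$ (l,j))"
        by (rule sum.cong) (use j True in \<open>auto simp: E_def\<close>)
      also have "\<dots> = (A * C) $$ (i,j)" using A' C i j by (simp add: scalar_prod_def)
      also have "\<dots> = F $$ (i,j)" using i j True unfolding AC F_def by simp
      finally show ?thesis .
    next
      case False
      have "(\<Sum>l\<in>{0..<N}. A $$ (i,l) * E $$ (l,j)) = (\<Sum>l\<in>{0..<N}. if l = j then A $$ (i,j) else 0)"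
        by (rule sum.cong) (use j False in \<open>auto simp: E_def\<close>)
      also have "\<dots> = F $$ (i,j)" using i j False by (simp add: F_def)
      finally show ?thesis .
    qed
    finally show "(A * E) $$ (i,j) = F $$ (i,j)" .
  qed (use A' in \<open>auto simp: F_def E_def\<close>)
  have F: "F \<in> carrier_mat N N" unfolding F_def by simp
  define F1 where "F1 = mat_delete F 0 0"
  have F1: "F1 \<in> carrier_mat L L" unfolding F1_def using F by (simp add: N_def L_def mat_delete_def)
  have "det F = F $$ (0,0) * cofactor F 0 0"
    by (rule det_col_single[OF F]) (auto simp: N_def F_def)
  hence dF: "det F = det A * det F1" by (simp add: F_def N_def cofactor_def F1_def)
  have "det F1 = F1 $$ (k,k) * cofactor F1 k k"
    by (rule det_col_single[OF F1]) (auto simp: N_def F_def F1_def L_def mat_delete_def)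
  also have "F1 $$ (k,k) = det A" by (simp add: N_def F_def F1_def L_def mat_delete_def)
  also have "cofactor F1 k k = det (mat_delete (mat_delete A (Suc k) (Suc k)) 0 0)"
  proof -
    have "mat_delete F1 k k = mat_delete (mat_delete A (Suc k) (Suc k)) 0 0"
      by (rule eq_matI) (use A in \<open>auto simp: N_def F_def F1_def L_def mat_delete_def\<close>)
    thus ?thesis by (simp add: cofactor_def)
  qed
  finally have dF1: "det F1 = det A * det (mat_delete (mat_delete A (Suc k) (Suc k)) 0 0)" .
  have dE: "det E = E $$ (0,0) * E $$ (Suc k, Suc k) - E $$ (0, Suc k) * E $$ (Suc k, 0)"
    by (rule det_mid_unit) (use E in \<open>auto simp: N_def E_def L_def\<close>)
  have e1: "E $$ (0,0) = det (mat_delete A 0 0)"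
    using A by (simp add: E_def N_def C_def adj_mat_def cofactor_def)
  have e2: "E $$ (Suc k, Suc k) = det (mat_delete A (Suc k) (Suc k))"
    using A by (simp add: E_def N_def C_def adj_mat_def cofactor_def L_def)
  have e3: "E $$ (0, Suc k) = (-1)^(Suc k) * det (mat_delete A (Suc k) 0)"
    using A by (simp add: E_def N_def C_def adj_mat_def cofactor_def L_def)
  have e4: "E $$ (Suc k, 0) = (-1)^(Suc k) * det (mat_delete A 0 (Suc k))"
    using A by (simp add: E_def N_def C_def adj_mat_def cofactor_def L_def)
  have pp: "(-1::'a)^(Suc k) * (-1)^(Suc k) = 1" by (simp add: power_add[symmetric])
  have "det (A * E) = det A * det E" by (rule det_mult[OF A' E])
  also have "det E = det (mat_delete A 0 0) * det (mat_delete A (Suc k) (Suc k))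
           - det (mat_delete A 0 (Suc k)) * det (mat_delete A (Suc k) 0)"
    unfolding dE e1 e2 e3 e4
    by (simp add: algebra_simps)
  finally show ?thesis unfolding AE dF dF1 by (simp add: algebra_simps)
qed

definition pert :: "'a::comm_ring_1 mat \<Rightarrow> 'a mat" where
  "pert M = mat (dim_row M) (dim_col M) (\<lambda>(i,j). M $$ (i,j) + (if i = 0 \<and> j = 0 then 1 else 0))"

lemma pert_carrier[simp]: "M \<in> carrier_mat n m \<Longrightarrow> pert M \<in> carrier_mat n m"
  by (simp add: pert_def)

lemma det_pert:
  fixes M :: "'a::comm_ring_1 mat"
  assumes M: "M \<in> carrier_mat n n" and n: "0 < n"
  shows "det (pert M) = det M + det (mat_delete M 0 0)"
proof -
  have cof: "cofactor (pert M) 0 j = cofactor M 0 j" for j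
  proof -
    have "mat_delete (pert M) 0 j = mat_delete M 0 j"
      by (rule eq_matI) (use M in \<open>auto simp: pert_def mat_delete_def\<close>)
    thus ?thesis by (simp add: cofactor_def)
  qed
  have "det (pert M) = (\<Sum>j<n. pert M $$ (0,j) * cofactor (pert M) 0 j)"
    by (rule laplace_expansion_row[OF pert_carrier[OF M] n])
  also have "\<dots> = (\<Sum>j<n. M $$ (0,j) * cofactor M 0 j + (if j = 0 then cofactor M 0 0 else 0))"
  proof (rule sum.cong[OF refl])
    fix j assume "j \<in> {..<n}"
    hence "pert M $$ (0,j) = M $$ (0,j) + (if j = 0 then 1 else 0)" using M n by (simp add: pert_def)
    thus "pert M $$ (0,j) * cofactor (pert M) 0 j = M $$ (0,j) * cofactor M 0 j + (if j = 0 then cofactor M 0 0 else 0)"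
      by (simp add: cof algebra_simps)
  qed
  also have "\<dots> = det M + cofactor M 0 0"
    by (simp add: sum.distrib laplace_expansion_row[OF M n] n)
  finally show ?thesis by (simp add: cofactor_def)
qed

lemma desnanot:
  fixes A :: "'a::field mat"
  assumes A: "A \<in> carrier_mat (Suc (Suc k)) (Suc (Suc k))"
    and nz: "det (mat_delete A 0 0) \<noteq> 0"
  shows "det A * det (mat_delete (mat_delete A (Suc k) (Suc k)) 0 0)
         = det (mat_delete A 0 0) * det (mat_delete A (Suc k) (Suc k))
           - det (mat_delete A 0 (Suc k)) * det (mat_delete A (Suc k) 0)"
proof (cases "det A = 0")
  case False
  thus ?thesis using desn_adj[OF A] by simp
next
  case True
  let ?A = "pert A"
  have A2: "?A \<in> carrier_mat (Suc (Suc k)) (Suc (Suc k))" using A by simp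
  have d1: "det ?A = det (mat_delete A 0 0)" using det_pert[OF A] True by simp
  have m00: "mat_delete ?A 0 0 = mat_delete A 0 0"
    by (rule eq_matI) (use A in \<open>auto simp: pert_def mat_delete_def\<close>)
  have m0L: "mat_delete ?A 0 (Suc k) = mat_delete A 0 (Suc k)"
    by (rule eq_matI) (use A in \<open>auto simp: pert_def mat_delete_def\<close>)
  have mL0: "mat_delete ?A (Suc k) 0 = mat_delete A (Suc k) 0"
    by (rule eq_matI) (use A in \<open>auto simp: pert_def mat_delete_def\<close>)
  have mLL: "mat_delete ?A (Suc k) (Suc k) = pert (mat_delete A (Suc k) (Suc k))"
    by (rule eq_matI) (use A in \<open>auto simp: pert_def mat_delete_def\<close>)
  have MLL: "mat_delete A (Suc k) (Suc k) \<in> carrier_mat (Suc k) (Suc k)"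
    using A by (simp add: mat_delete_def)
  have inn: "mat_delete (pert (mat_delete A (Suc k) (Suc k))) 0 0 = mat_delete (mat_delete A (Suc k) (Suc k)) 0 0"
    by (rule eq_matI) (use A in \<open>auto simp: pert_def mat_delete_def\<close>)
  have dLL: "det (pert (mat_delete A (Suc k) (Suc k))) = det (mat_delete A (Suc k) (Suc k)) + det (mat_delete (mat_delete A (Suc k) (Suc k)) 0 0)"
    by (rule det_pert[OF MLL]) simp
  have "det ?A * (det (mat_delete ?A 0 0) * det (mat_delete ?A (Suc k) (Suc k))
           - det (mat_delete ?A 0 (Suc k)) * det (mat_delete ?A (Suc k) 0))
         = det ?A * det ?A * det (mat_delete (mat_delete ?A (Suc k) (Suc k)) 0 0)"
    by (rule desn_adj[OF A2])
  hence "det (mat_delete A 0 0) * (det (mat_delete A 0 0) * (det (mat_delete A (Suc k) (Suc k)) + det (mat_delete (mat_delete A (Suc k) (Suc k)) 0 0))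
           - det (mat_delete A 0 (Suc k)) * det (mat_delete A (Suc k) 0))
         = det (mat_delete A 0 0) * det (mat_delete A 0 0) * det (mat_delete (mat_delete A (Suc k) (Suc k)) 0 0)"
    unfolding d1 m00 m0L mL0 mLL dLL inn .
  hence "det (mat_delete A 0 0) * (det (mat_delete A (Suc k) (Suc k)) + det (mat_delete (mat_delete A (Suc k) (Suc k)) 0 0))
           - det (mat_delete A 0 (Suc k)) * det (mat_delete A (Suc k) 0)
         = det (mat_delete A 0 0) * det (mat_delete (mat_delete A (Suc k) (Suc k)) 0 0)"
    using nz by (simp add: mult.assoc)
  thus ?thesis using True by (simp add: algebra_simps)
qed

definition hank :: "(int \<Rightarrow> 'a) \<Rightarrow> nat \<Rightarrow> int \<Rightarrow> 'a mat" where
  "hank u k n = mat k k (\<lambda>(i,j). u (n + int i + int j))"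

lemma hank_carrier[simp]: "hank u k n \<in> carrier_mat k k" by (simp add: hank_def)

lemma hank_desn:
  fixes u :: "int \<Rightarrow> 'a::field"
  assumes nz: "det (hank u (Suc k) (n+2)) \<noteq> 0"
  shows "det (hank u (Suc (Suc k)) n) * det (hank u k (n+2))
       = det (hank u (Suc k) (n+2)) * det (hank u (Suc k) n) - det (hank u (Suc k) (n+1)) * det (hank u (Suc k) (n+1))"
proof -
  let ?A = "hank u (Suc (Suc k)) n"
  have a1: "mat_delete ?A 0 0 = hank u (Suc k) (n+2)"
    by (rule eq_matI) (auto simp: hank_def mat_delete_def algebra_simps)
  have a2: "mat_delete ?A (Suc k) (Suc k) = hank u (Suc k) n"
    by (rule eq_matI) (auto simp: hank_def mat_delete_def algebra_simps)
  have a3: "mat_delete ?A 0 (Suc k) = hank u (Suc k) (n+1)"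
    by (rule eq_matI) (auto simp: hank_def mat_delete_def algebra_simps)
  have a4: "mat_delete ?A (Suc k) 0 = hank u (Suc k) (n+1)"
    by (rule eq_matI) (auto simp: hank_def mat_delete_def algebra_simps)
  have a5: "mat_delete (hank u (Suc k) n) 0 0 = hank u k (n+2)"
    by (rule eq_matI) (auto simp: hank_def mat_delete_def algebra_simps)
  show ?thesis using desnanot[of ?A k] nz unfolding a1 a2 a3 a4 a5 by simp
qed

lemma hank_Q:
  fixes R :: "nat \<Rightarrow> int \<Rightarrow> 'a::field"
  assumes Q: "is_Q_system r R"
  shows "\<alpha> \<le> r + 1 \<Longrightarrow> det (hank (R 1) \<alpha> (n - int \<alpha> + 1)) = R \<alpha> n"
proof -
  have R0: "R 0 n = 1" for n using Q by (simp add: is_Q_system_def)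
  have Rnz: "1 \<le> a \<Longrightarrow> a \<le> r \<Longrightarrow> R a n \<noteq> 0" for a n using Q by (simp add: is_Q_system_def)
  have Qs: "1 \<le> a \<Longrightarrow> a \<le> r \<Longrightarrow> R a (n + 1) * R a (n - 1) = (R a n)\<^sup>2 + R (a + 1) n * R (a - 1) n" for a n
    using Q by (simp add: is_Q_system_def)
  have "Suc \<alpha> \<le> r + 1 \<Longrightarrow> (\<forall>n. det (hank (R 1) \<alpha> (n - int \<alpha> + 1)) = R \<alpha> n) \<and> (\<forall>n. det (hank (R 1) (Suc \<alpha>) (n - int (Suc \<alpha>) + 1)) = R (Suc \<alpha>) n)" for \<alpha>
  proof (induction \<alpha>)
    case 0
    have "det (hank (R 1) 1 (n - 1 + 1)) = R 1 n" for n
      by (subst det_single) (auto simp: hank_def)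
    thus ?case by (simp add: R0 hank_def)
  next
    case (Suc a)
    have IH: "det (hank (R 1) a (n - int a + 1)) = R a n" "det (hank (R 1) (Suc a) (n - int (Suc a) + 1)) = R (Suc a) n" for n
      using Suc by auto
    have "det (hank (R 1) (Suc (Suc a)) (n - int (Suc (Suc a)) + 1)) = R (Suc (Suc a)) n" for n
    proof -
      define m where "m = n - int (Suc (Suc a)) + 1"
      have h1: "det (hank (R 1) a (m+2)) = R a n" using IH(1)[of n] by (simp add: m_def algebra_simps)
      have h2: "det (hank (R 1) (Suc a) (m+2)) = R (Suc a) (n+1)" using IH(2)[of "n+1"] by (simp add: m_def algebra_simps)
      have h3: "det (hank (R 1) (Suc a) m) = R (Suc a) (n-1)" using IH(2)[of "n-1"] by (simp add: m_def algebra_simps)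
      have h4: "det (hank (R 1) (Suc a) (m+1)) = R (Suc a) n" using IH(2)[of "n"] by (simp add: m_def algebra_simps)
      have nz: "R (Suc a) (n+1) \<noteq> 0" using Rnz[of "Suc a"] Suc.prems by simp
      have D: "det (hank (R 1) (Suc (Suc a)) m) * R a n = R (Suc a) (n+1) * R (Suc a) (n-1) - R (Suc a) n * R (Suc a) n"
        using hank_desn[of "R 1" a m] nz unfolding h1 h2 h3 h4 by simp
      have q: "R (Suc a) (n + 1) * R (Suc a) (n - 1) = (R (Suc a) n)\<^sup>2 + R (Suc (Suc a)) n * R a n"
        using Qs[of "Suc a" n] Suc.prems by simp
      have an: "R a n \<noteq> 0" using Rnz[of a n] R0 Suc.prems by (cases a) auto
      have "det (hank (R 1) (Suc (Suc a)) m) * R a n = R (Suc (Suc a)) n * R a n"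
        using D q by (simp add: power2_eq_square)
      thus ?thesis using an unfolding m_def by simp
    qed
    thus ?case using IH(2) by auto
  qed
  thus "\<alpha> \<le> r + 1 \<Longrightarrow> det (hank (R 1) \<alpha> (n - int \<alpha> + 1)) = R \<alpha> n"
    by (cases \<alpha>) (auto simp: R0)
qed

lemma neg1_pow_rev: "k \<le> a \<Longrightarrow> (-1::'a::comm_ring_1)^(a + (a - k)) = (-1)^k"
proof -
  assume "k \<le> a"
  then obtain d where a: "a = k + d" using le_Suc_ex by blast
  have "a + (a - k) = k + (d + d)" using a by simp
  thus ?thesis by (simp add: power_add)
qed

definition bigM :: "nat \<Rightarrow> (nat \<Rightarrow> int \<Rightarrow> 'a::field) \<Rightarrow> int \<Rightarrow> 'a mat" where
  "bigM r R m = mat (r + 2) (r + 2) (\<lambda>(i, j). R 1 (m + (int i + 1) + (int j + 1) - int r - 3))"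

lemma cons_qty_bigM: "cons_qty r R k m = det (mat_delete (bigM r R m) (r+1) (r + 1 - k))"
  by (simp add: cons_qty_def bigM_def)

lemma cons_rec:
  fixes R :: "nat \<Rightarrow> int \<Rightarrow> 'a::field"
  assumes i: "i \<le> r"
  shows "(\<Sum>k\<in>{0..r+1}. (-1)^k * cons_qty r R k m * R 1 (m + int i - int k)) = 0"
proof -
  let ?B = "bigM r R m"
  define N where "N = mat (r+2) (r+2) (\<lambda>(a,b). if a = r+1 then ?B $$ (i,b) else ?B $$ (a,b))"
  have N: "N \<in> carrier_mat (r+2) (r+2)" by (simp add: N_def)
  have "det N = 0"
    by (rule det_identical_rows[OF N, of i "r+1"]) (use i in \<open>auto simp: N_def bigM_def\<close>)
  moreover have "det N = (\<Sum>b<r+2. N $$ (r+1,b) * cofactor N (r+1) b)"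
    by (rule laplace_expansion_row[OF N]) simp
  moreover have "\<dots> = (\<Sum>b\<in>{0..r+1}. (-1)^(r+1+b) * R 1 (m + int i + int b - int r - 1) * det (mat_delete ?B (r+1) b))"
  proof -
    have "{..<r+2} = {0..r+1}" by auto
    moreover have "N $$ (r+1,b) * cofactor N (r+1) b = (-1)^(r+1+b) * R 1 (m + int i + int b - int r - 1) * det (mat_delete ?B (r+1) b)"
      if "b \<in> {0..r+1}" for b
    proof -
      have "mat_delete N (r+1) b = mat_delete ?B (r+1) b"
        by (rule eq_matI) (auto simp: N_def bigM_def mat_delete_def)
      moreover have "N $$ (r+1,b) = R 1 (m + int i + int b - int r - 1)"
        using that i by (simp add: N_def bigM_def algebra_simps)
      ultimately show ?thesis by (simp add: cofactor_def)
    qed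
    ultimately show ?thesis by (intro sum.cong) auto
  qed
  moreover have "\<dots> = (\<Sum>k\<in>{0..r+1}. (-1)^k * cons_qty r R k m * R 1 (m + int i - int k))"
  proof -
    have "(\<Sum>b\<in>{0..r+1}. (-1)^(r+1+b) * R 1 (m + int i + int b - int r - 1) * det (mat_delete ?B (r+1) b))
        = (\<Sum>k\<in>{0..r+1}. (-1)^(r+1+(r+1-k)) * R 1 (m + int i + int (r+1-k) - int r - 1) * det (mat_delete ?B (r+1) (r+1-k)))"
      by (subst sum.atLeastAtMost_rev) simp
    also have "\<dots> = (\<Sum>k\<in>{0..r+1}. (-1)^k * cons_qty r R k m * R 1 (m + int i - int k))"
    proof (rule sum.cong[OF refl])
      fix k assume k: "k \<in> {0..r+1}"
      hence "(-1::'a)^(r+1+(r+1-k)) = (-1)^k" by (intro neg1_pow_rev) auto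
      moreover have "m + int i + int (r+1-k) - int r - 1 = m + int i - int k" using k by auto
      ultimately show "(-1)^(r+1+(r+1-k)) * R 1 (m + int i + int (r+1-k) - int r - 1) * det (mat_delete ?B (r+1) (r+1-k))
         = (-1)^k * cons_qty r R k m * R 1 (m + int i - int k)"
        by (simp add: cons_qty_bigM algebra_simps)
    qed
    finally show ?thesis .
  qed
  ultimately show ?thesis by simp
qed

lemma hank_unique:
  fixes u :: "int \<Rightarrow> 'a::field"
  assumes H: "det (hank u (r+1) (m - int r - 1)) \<noteq> 0"
    and b0: "b 0 = b' 0"
    and hb: "\<And>i. i \<le> r \<Longrightarrow> (\<Sum>k\<in>{0..r+1}. (-1)^k * b k * u (m + int i - int k)) = 0"
    and hb': "\<And>i. i \<le> r \<Longrightarrow> (\<Sum>k\<in>{0..r+1}. (-1)^k * b' k * u (m + int i - int k)) = 0"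
    and k: "k \<le> r + 1"
  shows "b k = b' k"
proof -
  let ?H = "hank u (r+1) (m - int r - 1)"
  define v where "v = vec (r+1) (\<lambda>j. (-1)^(r+1-j) * (b (r+1-j) - b' (r+1-j)))"
  have v: "v \<in> carrier_vec (r+1)" by (simp add: v_def)
  have Hv: "?H *\<^sub>v v = 0\<^sub>v (r+1)"
  proof (rule eq_vecI)
    fix i assume "i < dim_vec (0\<^sub>v (r+1) :: 'a vec)"
    hence i: "i \<le> r" by simp
    have "(?H *\<^sub>v v) $ i = (\<Sum>j\<in>{0..<r+1}. u (m - int r - 1 + int i + int j) * ((-1)^(r+1-j) * (b (r+1-j) - b' (r+1-j))))"
      using i by (simp add: scalar_prod_def hank_def v_def)
    also have "\<dots> = (\<Sum>k\<in>{1..r+1}. (-1)^k * (b k - b' k) * u (m + int i - int k))"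
    proof (rule sum.reindex_bij_witness[of _ "\<lambda>k. r+1-k" "\<lambda>j. r+1-j"])
      fix a assume a: "a \<in> {0..<r+1}"
      hence e: "m + int i - int (r + 1 - a) = m - int r - 1 + int i + int a" by auto
      show "(-1) ^ (r + 1 - a) * (b (r + 1 - a) - b' (r + 1 - a)) * u (m + int i - int (r + 1 - a))
         = u (m - int r - 1 + int i + int a) * ((-1)^(r+1-a) * (b (r+1-a) - b' (r+1-a)))"
        unfolding e by simp
    qed auto
    also have "\<dots> = (\<Sum>k\<in>{0..r+1}. (-1)^k * (b k - b' k) * u (m + int i - int k))"
      by (subst (2) sum.atLeast_Suc_atMost) (auto simp: b0)
    also have "\<dots> = 0"
      using hb[OF i] hb'[OF i] by (simp add: algebra_simps sum_subtractf)
    finally show "(?H *\<^sub>v v) $ i = 0\<^sub>v (r+1) $ i" using i by simp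
  qed (auto simp: hank_def)
  have "v = 0\<^sub>v (r+1)"
  proof (rule ccontr)
    assume "v \<noteq> 0\<^sub>v (r+1)"
    hence "det ?H = 0" using det_0_iff_vec_prod_zero_field[of ?H "r+1"] v Hv by auto
    thus False using H by simp
  qed
  show ?thesis
  proof (cases "k = 0")
    case True thus ?thesis using b0 by simp
  next
    case False
    hence "v $ (r+1-k) = 0" using \<open>v = 0\<^sub>v (r+1)\<close> k by simp
    thus ?thesis using False k by (simp add: v_def)
  qed
qed



lemma alg1: "(a2::'a::field) * a0 = a1*a1 + b \<Longrightarrow> a1 * b + a1 * (a1 * a1) = a0 * (a1 * a2)"
  by (simp add: algebra_simps) (metis mult.commute mult.left_commute distrib_left)

lemma alg2:
  fixes a0 a1 a2 b0 b1 b2 c1 c' :: "'a::field"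
  assumes qa: "a2 * a0 = a1 * a1 + b1 * c1" and qb: "b2 * b0 = b1 * b1 + c' * a1"
    and nz: "a0 \<noteq> 0" "a1 \<noteq> 0" "a2 \<noteq> 0" "b0 \<noteq> 0" "b1 \<noteq> 0"
  shows "a0 * b1 / (b0 * a1) + a0 * c' / (b0 * b1) = a1 * b2 / (b1 * a2) + c1 * b2 / (a1 * a2)"
proof -
  have "a0 * b1 / (b0 * a1) + a0 * c' / (b0 * b1) = a0 * (b1 * b1 + c' * a1) / (b0 * a1 * b1)"
    using nz by (simp add: field_simps)
  also have "\<dots> = a0 * b2 / (a1 * b1)" unfolding qb[symmetric] using nz by (simp add: field_simps)
  also have "\<dots> = b2 * (a1 * a1 + b1 * c1) / (b1 * a1 * a2)" unfolding qa[symmetric] using nz by (simp add: field_simps)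
  also have "\<dots> = a1 * b2 / (b1 * a2) + c1 * b2 / (a1 * a2)" using nz by (simp add: field_simps)
  finally show ?thesis .
qed

fun qc :: "(nat \<Rightarrow> 'a::comm_ring_1) \<Rightarrow> (nat \<Rightarrow> 'a) \<Rightarrow> nat \<Rightarrow> nat \<Rightarrow> 'a" where
  "qc d e 0 l = 0"
| "qc d e (Suc 0) l = (if l = 0 then 1 else 0)"
| "qc d e (Suc (Suc k)) l = (if l = 0 then 0 else qc d e (Suc k) (l - 1)) - d k * qc d e (Suc k) l
     - e k * (if l = 0 then 0 else qc d e k (l - 1))"

lemma qc_deg: "k \<le> l \<Longrightarrow> qc d e k l = 0"
  by (induction d e k l rule: qc.induct) auto

declare qc.simps[simp del]

locale qsys =
  fixes r :: nat and R :: "nat \<Rightarrow> int \<Rightarrow> 'a::field"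
  assumes r1: "1 \<le> r" and Q: "is_Q_system r R"
begin

lemma R0[simp]: "R 0 n = 1" using Q by (simp add: is_Q_system_def)
lemma Rr1[simp]: "R (Suc r) n = 1" using Q by (simp add: is_Q_system_def)
lemma Rnz: "a \<le> Suc r \<Longrightarrow> R a n \<noteq> 0"
  using Q by (cases "a = 0"; cases "a = Suc r") (auto simp: is_Q_system_def)
lemma Qs: "1 \<le> a \<Longrightarrow> a \<le> r \<Longrightarrow> R a (n + 1) * R a (n - 1) = (R a n)\<^sup>2 + R (a + 1) n * R (a - 1) n"
  using Q by (simp add: is_Q_system_def)

lemma yw_odd: "yw R (2*i+1) n = R i n * R (Suc i) (n+1) / (R (Suc i) n * R i (n+1))"
  by (simp add: yw_def Let_def)
lemma yw_even: "0 < i \<Longrightarrow> yw R (2*i) n = R (i-1) n * R (Suc i) (n+1) / (R i n * R i (n+1))"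
  by (simp add: yw_def Let_def)

definition dd :: "int \<Rightarrow> nat \<Rightarrow> 'a" where "dd n i = yw R (2*i+1) n"
definition ee :: "int \<Rightarrow> nat \<Rightarrow> 'a" where "ee n i = (if 1 \<le> i \<and> i \<le> r then yw R (2*i) n else 0)"

lemma dd_eq: "dd n i = R i n * R (Suc i) (n+1) / (R (Suc i) n * R i (n+1))"
  unfolding dd_def by (rule yw_odd)
lemma ee_eq: "1 \<le> i \<Longrightarrow> i \<le> r \<Longrightarrow> ee n i = R (i-1) n * R (Suc i) (n+1) / (R i n * R i (n+1))"
  unfolding ee_def by (simp add: yw_even)
lemma ee0[simp]: "ee n 0 = 0" by (simp add: ee_def)
lemma ee_big: "r < i \<Longrightarrow> ee n i = 0" by (simp add: ee_def)

lemma LR1: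
  assumes "1 \<le> i" "i \<le> r"
  shows "ee (n+1) i * dd n (i-1) = dd (n+1) i * ee n i"
proof -
  obtain j where i: "i = Suc j" using assms by (cases i) auto
  have nz: "R j m \<noteq> 0" "R (Suc j) m \<noteq> 0" "R (Suc (Suc j)) m \<noteq> 0" for m
    using Rnz assms i by auto
  have e1: "ee n i = R (i-1) n * R (Suc i) (n+1) / (R i n * R i (n+1))" by (rule ee_eq[OF assms])
  have e2: "ee (n+1) i = R (i-1) (n+1) * R (Suc i) (n+1+1) / (R i (n+1) * R i (n+1+1))" by (rule ee_eq[OF assms])
  show ?thesis using assms nz unfolding dd_eq e1 e2 unfolding i
    by (simp add: field_simps)
qed

lemma LR2:
  assumes i: "i \<le> r"
  shows "dd n i - ee (n+1) i = dd (n+1) i - ee n (Suc i)"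
proof -
  have nz: "a \<le> Suc r \<Longrightarrow> R a m \<noteq> 0" for a m using Rnz by auto
  define c' where "c' = (if Suc i \<le> r then R (Suc (Suc i)) (n+1) else 0)"
  define c1 where "c1 = (if 1 \<le> i then R (i-1) (n+1) else 0)"
  have e0: "ee n (Suc i) = R i n * c' / (R (Suc i) n * R (Suc i) (n+1))"
    using ee_eq[of "Suc i" n] by (auto simp: c'_def ee_def)
  have e1: "ee (n+1) i = c1 * R (Suc i) (n+1+1) / (R i (n+1) * R i (n+1+1))"
    using ee_eq[of i "n+1"] i by (auto simp: c1_def ee_def)
  have qa: "R i (n+1+1) * R i n = R i (n+1) * R i (n+1) + R (Suc i) (n+1) * c1"
  proof (cases "1 \<le> i")
    case True thus ?thesis using Qs[of i "n+1"] i by (simp add: c1_def power2_eq_square)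
  next
    case False hence "i = 0" by simp
    thus ?thesis by (simp add: c1_def)
  qed
  have qb: "R (Suc i) (n+1+1) * R (Suc i) n = R (Suc i) (n+1) * R (Suc i) (n+1) + c' * R i (n+1)"
  proof (cases "Suc i \<le> r")
    case True thus ?thesis using Qs[of "Suc i" "n+1"] by (simp add: c'_def power2_eq_square)
  next
    case False hence "i = r" using i by simp
    thus ?thesis by (simp add: c'_def)
  qed
  have "dd n i + ee n (Suc i) = dd (n+1) i + ee (n+1) i"
    unfolding dd_eq e0 e1
    by (rule alg2[OF qa qb]) (use nz i in auto)
  thus ?thesis by (simp add: algebra_simps)
qed

definition Xm :: "int \<Rightarrow> 'a mat" where
  "Xm n = mat (Suc r) (Suc r) (\<lambda>(i,j). if i = j then 1 else if i = Suc j then - ee n i else 0)"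
definition Bm :: "int \<Rightarrow> 'a mat" where
  "Bm n = mat (Suc r) (Suc r) (\<lambda>(i,j). if i = j then dd n i else if j = Suc i then 1 else 0)"
definition Am :: "int \<Rightarrow> 'a mat" where
  "Am n = mat (Suc r) (Suc r) (\<lambda>(i,j). if j \<le> i then (\<Prod>l\<in>{Suc j..i}. ee n l) else 0)"
definition Tm :: "int \<Rightarrow> 'a mat" where
  "Tm n = Am n * Bm n"

lemma Xm_c[simp]: "Xm n \<in> carrier_mat (Suc r) (Suc r)" by (simp add: Xm_def)
lemma Bm_c[simp]: "Bm n \<in> carrier_mat (Suc r) (Suc r)" by (simp add: Bm_def)
lemma Am_c[simp]: "Am n \<in> carrier_mat (Suc r) (Suc r)" by (simp add: Am_def)
lemma Tm_c[simp]: "Tm n \<in> carrier_mat (Suc r) (Suc r)" unfolding Tm_def by (rule mult_carrier_mat[OF Am_c Bm_c])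

lemma dims[simp]: "dim_row (Am n) = Suc r" "dim_col (Am n) = Suc r" "dim_row (Bm n) = Suc r" "dim_col (Bm n) = Suc r"
  "dim_row (Xm n) = Suc r" "dim_col (Xm n) = Suc r" "dim_row (Tm n) = Suc r" "dim_col (Tm n) = Suc r"
  by (simp_all add: Am_def Bm_def Xm_def Tm_def)

lemma sq_assoc: "A \<in> carrier_mat (Suc r) (Suc r) \<Longrightarrow> B \<in> carrier_mat (Suc r) (Suc r) \<Longrightarrow> C \<in> carrier_mat (Suc r) (Suc r)
  \<Longrightarrow> (A * B) * C = A * (B * (C :: 'a mat))" by (rule assoc_mult_mat)

lemma sum_if_pred: "(\<Sum>k\<in>{0..<M}. if Suc k = i then g k else 0) = (if 0 < i \<and> i \<le> M then g (i - 1) else 0)"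
proof (cases i)
  case 0 thus ?thesis by simp
next
  case (Suc j)
  have "(\<Sum>k\<in>{0..<M}. if Suc k = i then g k else 0) = (\<Sum>k\<in>{0..<M}. if k = j then g k else 0)"
    by (rule sum.cong) (auto simp: Suc)
  thus ?thesis by (auto simp: Suc)
qed

lemma XM:
  assumes M: "M \<in> carrier_mat (Suc r) (Suc r)" and i: "i < Suc r" and j: "j < Suc r"
  shows "(Xm n * M) $$ (i,j) = M $$ (i,j) - (if 0 < i then ee n i * M $$ (i-1,j) else 0)"
proof -
  have "(Xm n * M) $$ (i,j) = (\<Sum>k\<in>{0..<Suc r}. Xm n $$ (i,k) * M $$ (k,j))"
    using M i j by (simp add: scalar_prod_def Xm_def)
  also have "\<dots> = (\<Sum>k\<in>{0..<Suc r}. (if k = i then M $$ (i,j) else 0) + (if Suc k = i then - ee n i * M $$ (k,j) else 0))"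
    by (rule sum.cong) (use i in \<open>auto simp: Xm_def\<close>)
  also have "\<dots> = M $$ (i,j) - (if 0 < i then ee n i * M $$ (i-1,j) else 0)"
    using i by (simp add: sum.distrib sum_if_pred)
  finally show ?thesis .
qed

lemma MB:
  assumes M: "M \<in> carrier_mat (Suc r) (Suc r)" and i: "i < Suc r" and j: "j < Suc r"
  shows "(M * Bm n) $$ (i,j) = M $$ (i,j) * dd n j + (if 0 < j then M $$ (i,j-1) else 0)"
proof -
  have "(M * Bm n) $$ (i,j) = (\<Sum>k\<in>{0..<Suc r}. M $$ (i,k) * Bm n $$ (k,j))"
    using M i j by (simp add: scalar_prod_def Bm_def)
  also have "\<dots> = (\<Sum>k\<in>{0..<Suc r}. (if k = j then M $$ (i,j) * dd n j else 0) + (if Suc k = j then M $$ (i,k) else 0))"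
    by (rule sum.cong) (use j in \<open>auto simp: Bm_def\<close>)
  also have "\<dots> = M $$ (i,j) * dd n j + (if 0 < j then M $$ (i,j-1) else 0)"
    using j by (simp add: sum.distrib sum_if_pred)
  finally show ?thesis .
qed

lemma BM:
  assumes M: "M \<in> carrier_mat (Suc r) (Suc r)" and i: "i < Suc r" and j: "j < Suc r"
  shows "(Bm n * M) $$ (i,j) = dd n i * M $$ (i,j) + (if Suc i < Suc r then M $$ (Suc i,j) else 0)"
proof -
  have "(Bm n * M) $$ (i,j) = (\<Sum>k\<in>{0..<Suc r}. Bm n $$ (i,k) * M $$ (k,j))"
    using M i j by (simp add: scalar_prod_def Bm_def)
  also have "\<dots> = (\<Sum>k\<in>{0..<Suc r}. (if k = i then dd n i * M $$ (i,j) else 0) + (if k = Suc i then M $$ (k,j) else 0))"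
    by (rule sum.cong) (use i in \<open>auto simp: Bm_def\<close>)
  also have "\<dots> = dd n i * M $$ (i,j) + (if Suc i < Suc r then M $$ (Suc i,j) else 0)"
    using i by (simp add: sum.distrib)
  finally show ?thesis .
qed

lemma MX:
  assumes M: "M \<in> carrier_mat (Suc r) (Suc r)" and i: "i < Suc r" and j: "j < Suc r"
  shows "(M * Xm n) $$ (i,j) = M $$ (i,j) - (if Suc j < Suc r then M $$ (i,Suc j) * ee n (Suc j) else 0)"
proof -
  have "(M * Xm n) $$ (i,j) = (\<Sum>k\<in>{0..<Suc r}. M $$ (i,k) * Xm n $$ (k,j))"
    using M i j by (simp add: scalar_prod_def Xm_def)
  also have "\<dots> = (\<Sum>k\<in>{0..<Suc r}. (if k = j then M $$ (i,j) else 0) + (if k = Suc j then - M $$ (i,k) * ee n k else 0))"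
    by (rule sum.cong) (use j in \<open>auto simp: Xm_def\<close>)
  also have "\<dots> = M $$ (i,j) - (if Suc j < Suc r then M $$ (i,Suc j) * ee n (Suc j) else 0)"
    using j by (simp add: sum.distrib)
  finally show ?thesis .
qed

lemma XA: "Xm n * Am n = 1\<^sub>m (Suc r)"
proof (rule eq_matI)
  fix i j assume "i < dim_row (1\<^sub>m (Suc r) :: 'a mat)" "j < dim_col (1\<^sub>m (Suc r) :: 'a mat)"
  hence i: "i < Suc r" and j: "j < Suc r" by auto
  have xm: "(Xm n * Am n) $$ (i,j) = Am n $$ (i,j) - (if 0 < i then ee n i * Am n $$ (i-1,j) else 0)"
    by (rule XM[OF Am_c i j])
  show "(Xm n * Am n) $$ (i,j) = 1\<^sub>m (Suc r) $$ (i,j)"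
  proof (cases i)
    case 0 thus ?thesis unfolding xm using i j by (simp add: Am_def)
  next
    case (Suc i')
    show ?thesis
    proof (cases "j \<le> i'")
      case True
      thus ?thesis unfolding xm using i j Suc by (simp add: Am_def)
    next
      case False thus ?thesis unfolding xm using i j Suc by (simp add: Am_def)
    qed
  qed
qed (auto simp: Xm_def Am_def)

lemma AX: "Am n * Xm n = 1\<^sub>m (Suc r)"
  by (rule mat_mult_left_right_inverse[OF Xm_c Am_c XA])

lemma XB: "Xm (n+1) * Bm n = Bm (n+1) * Xm n"
proof (rule eq_matI)
  fix i j assume "i < dim_row (Bm (n+1) * Xm n)" "j < dim_col (Bm (n+1) * Xm n)"
  hence i: "i < Suc r" and j: "j < Suc r" by (auto simp: Bm_def Xm_def)
  have L: "(Xm (n+1) * Bm n) $$ (i,j) = Bm n $$ (i,j) - (if 0 < i then ee (n+1) i * Bm n $$ (i-1,j) else 0)"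
    by (rule XM[OF Bm_c i j])
  have Rr: "(Bm (n+1) * Xm n) $$ (i,j) = dd (n+1) i * Xm n $$ (i,j) + (if Suc i < Suc r then Xm n $$ (Suc i,j) else 0)"
    by (rule BM[OF Xm_c i j])
  have l2: "dd n i - ee (n+1) i = dd (n+1) i - ee n (Suc i)" using LR2 i by simp
  have eb: "ee n (Suc r) = 0" by (simp add: ee_big)
  consider "j = i" | "Suc j = i" | "j = Suc i" | "j \<noteq> i" "Suc j \<noteq> i" "j \<noteq> Suc i" by blast
  thus "(Xm (n+1) * Bm n) $$ (i,j) = (Bm (n+1) * Xm n) $$ (i,j)"
  proof cases
    case 1
    have eb2: "\<not> Suc i < Suc r \<Longrightarrow> ee n (Suc i) = 0" by (simp add: ee_big)
    show ?thesis unfolding L Rr using i j 1 l2 eb2 r1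
      by (cases "Suc i < Suc r") (auto simp: Bm_def Xm_def algebra_simps)
  next
    case 2
    have l1: "ee (n+1) i * dd n (i-1) = dd (n+1) i * ee n i" using LR1[of i n] 2 i by auto
    show ?thesis unfolding L Rr using i j 2 l1 by (auto simp: Bm_def Xm_def)
  next
    case 3
    show ?thesis unfolding L Rr using i j 3 by (auto simp: Bm_def Xm_def)
  next
    case 4
    show ?thesis unfolding L Rr using i j 4 by (auto simp: Bm_def Xm_def)
  qed
qed (auto simp: Bm_def Xm_def)

lemma BA: "Bm n * Am n = Tm (n+1)"
proof -
  have BAc: "Bm n * Am n \<in> carrier_mat (Suc r) (Suc r)" by (rule mult_carrier_mat[OF Bm_c Am_c])
  have "Bm n * Am n = (Am (n+1) * Xm (n+1)) * (Bm n * Am n)" unfolding AX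
    by (rule left_mult_one_mat[symmetric]) (rule BAc)
  also have "\<dots> = Am (n+1) * (Xm (n+1) * (Bm n * Am n))" by (rule sq_assoc[OF Am_c Xm_c BAc])
  also have "Xm (n+1) * (Bm n * Am n) = (Xm (n+1) * Bm n) * Am n" by (rule sq_assoc[OF Xm_c Bm_c Am_c, symmetric])
  also have "\<dots> = (Bm (n+1) * Xm n) * Am n" unfolding XB ..
  also have "\<dots> = Bm (n+1) * (Xm n * Am n)" by (rule sq_assoc[OF Bm_c Xm_c Am_c])
  also have "\<dots> = Bm (n+1)" unfolding XA by (rule right_mult_one_mat[OF Bm_c])
  finally show ?thesis unfolding Tm_def .
qed

lemma XT: "Xm n * Tm n = Bm n"
  unfolding Tm_def sq_assoc[OF Xm_c Am_c Bm_c, symmetric] XA by (rule left_mult_one_mat[OF Bm_c])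

lemma Tpow: "Tm n ^\<^sub>m (Suc s) = Am n * (Tm (n+1) ^\<^sub>m s) * Bm n"
proof (induction s)
  case 0
  have "Tm n ^\<^sub>m (Suc 0) = 1\<^sub>m (Suc r) * Tm n" by simp
  also have "\<dots> = Tm n" by (rule left_mult_one_mat[OF Tm_c])
  finally show ?case by (simp add: Tm_def right_mult_one_mat[OF Am_c])
next
  case (Suc s)
  let ?P = "Tm (n+1) ^\<^sub>m s"
  have P: "?P \<in> carrier_mat (Suc r) (Suc r)" by simp
  have AP: "Am n * ?P \<in> carrier_mat (Suc r) (Suc r)" by (rule mult_carrier_mat[OF Am_c P])
  have "Tm n ^\<^sub>m Suc (Suc s) = (Am n * ?P * Bm n) * (Am n * Bm n)"
    using Suc by (simp add: Tm_def)
  also have "\<dots> = Am n * ?P * (Bm n * (Am n * Bm n))" by (rule sq_assoc[OF AP Bm_c mult_carrier_mat[OF Am_c Bm_c]])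
  also have "Bm n * (Am n * Bm n) = (Bm n * Am n) * Bm n" by (rule sq_assoc[OF Bm_c Am_c Bm_c, symmetric])
  also have "Am n * ?P * ((Bm n * Am n) * Bm n) = (Am n * ?P * (Bm n * Am n)) * Bm n"
    by (rule sq_assoc[OF AP mult_carrier_mat[OF Bm_c Am_c] Bm_c, symmetric])
  also have "Am n * ?P * (Bm n * Am n) = Am n * (?P * (Bm n * Am n))" by (rule sq_assoc[OF Am_c P mult_carrier_mat[OF Bm_c Am_c]])
  also have "?P * (Bm n * Am n) = Tm (n+1) ^\<^sub>m Suc s" unfolding BA by simp
  finally show ?case .
qed

lemma AM0:
  assumes M: "M \<in> carrier_mat (Suc r) (Suc r)" and j: "j < Suc r"
  shows "(Am n * M) $$ (0,j) = M $$ (0,j)"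
proof -
  have "(Am n * M) $$ (0,j) = (\<Sum>k\<in>{0..<Suc r}. Am n $$ (0,k) * M $$ (k,j))"
    using M j by (simp add: scalar_prod_def Am_def)
  also have "\<dots> = (\<Sum>k\<in>{0..<Suc r}. if k = 0 then M $$ (0,j) else 0)"
    by (rule sum.cong) (auto simp: Am_def)
  finally show ?thesis by simp
qed

lemma T00: "(Tm n ^\<^sub>m s) $$ (0,0) * R 1 n = R 1 (n + int s)"
proof (induction s arbitrary: n)
  case 0 thus ?case by simp
next
  case (Suc s)
  let ?P = "Tm (n+1) ^\<^sub>m s"
  have AP: "Am n * ?P \<in> carrier_mat (Suc r) (Suc r)" by (rule mult_carrier_mat[OF Am_c]) simp
  have "(Tm n ^\<^sub>m Suc s) $$ (0,0) = (Am n * ?P * Bm n) $$ (0,0)" by (simp only: Tpow)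
  also have "\<dots> = (Am n * ?P) $$ (0,0) * dd n 0" by (subst MB[OF AP]) auto
  also have "(Am n * ?P) $$ (0,0) = ?P $$ (0,0)" by (rule AM0) simp_all
  finally have "(Tm n ^\<^sub>m Suc s) $$ (0,0) * R 1 n = ?P $$ (0,0) * (dd n 0 * R 1 n)" by simp
  also have "dd n 0 * R 1 n = R 1 (n+1)" using Rnz[of 1 n] r1 by (simp add: dd_eq)
  also have "?P $$ (0,0) * R 1 (n+1) = R 1 (n + 1 + int s)" by (rule Suc.IH)
  finally show ?case by (simp add: algebra_simps)
qed

lemma pow_add: "Tm n ^\<^sub>m (l + s) = Tm n ^\<^sub>m l * Tm n ^\<^sub>m s"
proof (induction s)
  case 0 thus ?case by (simp add: right_mult_one_mat[of _ "Suc r" "Suc r"])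
next
  case (Suc s)
  have "Tm n ^\<^sub>m (l + Suc s) = (Tm n ^\<^sub>m l * Tm n ^\<^sub>m s) * Tm n" using Suc by simp
  also have "\<dots> = Tm n ^\<^sub>m l * (Tm n ^\<^sub>m s * Tm n)" by (rule sq_assoc) simp_all
  finally show ?case by simp
qed

definition Sr :: "int \<Rightarrow> (nat \<Rightarrow> 'a) \<Rightarrow> nat \<Rightarrow> 'a" where
  "Sr n q j = (\<Sum>l\<in>{0..Suc r}. q l * (Tm n ^\<^sub>m l) $$ (0,j))"

lemma Sr_shift:
  assumes q: "q (Suc r) = 0" and j: "j < Suc r"
  shows "Sr n (\<lambda>l. if l = 0 then 0 else q (l - 1)) j = (\<Sum>i\<in>{0..<Suc r}. Sr n q i * Tm n $$ (i,j))"
proof -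
  let ?T = "Tm n"
  have "Sr n (\<lambda>l. if l = 0 then 0 else q (l - 1)) j = (\<Sum>l\<in>{Suc 0..Suc r}. q (l - 1) * (?T ^\<^sub>m l) $$ (0,j))"
    unfolding Sr_def by (subst sum.atLeast_Suc_atMost) auto
  also have "\<dots> = (\<Sum>l\<in>{0..r}. q l * (?T ^\<^sub>m Suc l) $$ (0,j))"
    by (subst sum.shift_bounds_cl_Suc_ivl) simp
  also have "\<dots> = (\<Sum>l\<in>{0..Suc r}. q l * (?T ^\<^sub>m Suc l) $$ (0,j))"
    using q by simp
  also have "\<dots> = (\<Sum>l\<in>{0..Suc r}. \<Sum>i\<in>{0..<Suc r}. q l * ((?T ^\<^sub>m l) $$ (0,i) * ?T $$ (i,j)))"
  proof (rule sum.cong[OF refl])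
    fix l
    have "(?T ^\<^sub>m Suc l) $$ (0,j) = (\<Sum>i\<in>{0..<Suc r}. (?T ^\<^sub>m l) $$ (0,i) * ?T $$ (i,j))"
      using j by (simp add: scalar_prod_def)
    thus "q l * (?T ^\<^sub>m Suc l) $$ (0,j) = (\<Sum>i\<in>{0..<Suc r}. q l * ((?T ^\<^sub>m l) $$ (0,i) * ?T $$ (i,j)))"
      by (simp only: sum_distrib_left)
  qed
  also have "\<dots> = (\<Sum>i\<in>{0..<Suc r}. \<Sum>l\<in>{0..Suc r}. q l * ((?T ^\<^sub>m l) $$ (0,i) * ?T $$ (i,j)))"
    by (rule sum.swap)
  also have "\<dots> = (\<Sum>i\<in>{0..<Suc r}. Sr n q i * ?T $$ (i,j))"
    unfolding Sr_def sum_distrib_right by (simp only: mult.assoc)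
  finally show ?thesis .
qed

lemma XT_entry:
  assumes k: "k < Suc r" and j: "j < Suc r"
  shows "Tm n $$ (k,j) - (if 0 < k then ee n k * Tm n $$ (k-1,j) else 0) = Bm n $$ (k,j)"
proof -
  have "(Xm n * Tm n) $$ (k,j) = Tm n $$ (k,j) - (if 0 < k then ee n k * Tm n $$ (k-1,j) else 0)"
    by (rule XM[OF Tm_c k j])
  thus ?thesis unfolding XT by simp
qed

lemma Sr_qc:
  assumes k: "k \<le> Suc (Suc r)" and j: "j < Suc r"
  shows "Sr n (qc (dd n) (ee n) k) j = (if k = 0 then 0 else if j = k - 1 then 1 else 0)"
  using k j
proof (induction k arbitrary: j rule: less_induct)
  case (less k)
  show ?case
  proof (cases k)
    case 0 thus ?thesis by (simp add: Sr_def qc.simps)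
  next
    case (Suc k1)
    show ?thesis
    proof (cases k1)
      case 0
      have "Sr n (qc (dd n) (ee n) k) j = (\<Sum>l\<in>{0..Suc r}. if l = 0 then (Tm n ^\<^sub>m 0) $$ (0,j) else 0)"
        unfolding Sr_def by (rule sum.cong) (auto simp: Suc 0 qc.simps)
      also have "\<dots> = (Tm n ^\<^sub>m 0) $$ (0,j)" by simp
      also have "\<dots> = (if j = 0 then 1 else 0)" using less.prems by simp
      finally show ?thesis using Suc 0 by simp
    next
      case (Suc k')
      have kk: "k = Suc (Suc k')" using \<open>k = Suc k1\<close> Suc by simp
      have k'r: "k' \<le> r" using less.prems kk by simp
      let ?q1 = "qc (dd n) (ee n) (Suc k')" and ?q0 = "qc (dd n) (ee n) k'"
      have IH1: "Sr n ?q1 i = (if i = k' then 1 else 0)" if "i < Suc r" for i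
        using less.IH[of "Suc k'" i] that less.prems kk by simp
      have IH0: "Sr n ?q0 i = (if k' = 0 then 0 else if i = k' - 1 then 1 else 0)" if "i < Suc r" for i
        using less.IH[of k' i] that less.prems kk by simp
      have d1: "?q1 (Suc r) = 0" by (rule qc_deg) (use k'r in simp)
      have d0: "?q0 (Suc r) = 0" by (rule qc_deg) (use k'r in simp)
      have s1: "Sr n (\<lambda>l. if l = 0 then 0 else ?q1 (l - 1)) j = Tm n $$ (k',j)"
      proof -
        have "Sr n (\<lambda>l. if l = 0 then 0 else ?q1 (l - 1)) j = (\<Sum>i\<in>{0..<Suc r}. Sr n ?q1 i * Tm n $$ (i,j))"
          by (rule Sr_shift[of ?q1, OF d1 less.prems(2)])
        also have "\<dots> = (\<Sum>i\<in>{0..<Suc r}. if i = k' then Tm n $$ (k',j) else 0)"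
          by (rule sum.cong) (auto simp: IH1)
        finally show ?thesis using k'r by simp
      qed
      have s0: "Sr n (\<lambda>l. if l = 0 then 0 else ?q0 (l - 1)) j = (if 0 < k' then Tm n $$ (k'-1,j) else 0)"
      proof -
        have "Sr n (\<lambda>l. if l = 0 then 0 else ?q0 (l - 1)) j = (\<Sum>i\<in>{0..<Suc r}. Sr n ?q0 i * Tm n $$ (i,j))"
          by (rule Sr_shift[of ?q0, OF d0 less.prems(2)])
        also have "\<dots> = (\<Sum>i\<in>{0..<Suc r}. if 0 < k' \<and> i = k' - 1 then Tm n $$ (k'-1,j) else 0)"
          by (rule sum.cong) (auto simp: IH0)
        finally show ?thesis using k'r by auto
      qed
      have "Sr n (qc (dd n) (ee n) k) j = Sr n (\<lambda>l. if l = 0 then 0 else ?q1 (l - 1)) j - dd n k' * Sr n ?q1 j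
          - ee n k' * Sr n (\<lambda>l. if l = 0 then 0 else ?q0 (l - 1)) j"
        unfolding Sr_def kk by (simp add: qc.simps sum_subtractf sum_distrib_left sum.distrib algebra_simps)
      also have "\<dots> = Tm n $$ (k',j) - (if 0 < k' then ee n k' * Tm n $$ (k'-1,j) else 0) - dd n k' * (if j = k' then 1 else 0)"
        unfolding s1 s0 IH1[OF less.prems(2)] by simp
      also have "\<dots> = Bm n $$ (k',j) - dd n k' * (if j = k' then 1 else 0)"
        using XT_entry[of k' j n] k'r less.prems by simp
      also have "\<dots> = (if k = 0 then 0 else if j = k - 1 then 1 else 0)"
        using k'r less.prems kk by (auto simp: Bm_def)
      finally show ?thesis .
    qed
  qed
qed

lemma lin_rec:
  "(\<Sum>l\<in>{0..Suc r}. qc (dd n) (ee n) (Suc (Suc r)) l * R 1 (n + int l + int s)) = 0"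
proof -
  let ?q = "qc (dd n) (ee n) (Suc (Suc r))"
  let ?T = "Tm n"
  have "(\<Sum>l\<in>{0..Suc r}. ?q l * R 1 (n + int l + int s))
      = (\<Sum>l\<in>{0..Suc r}. ?q l * ((?T ^\<^sub>m (l + s)) $$ (0,0) * R 1 n))"
  proof (rule sum.cong[OF refl])
    fix l
    have "(?T ^\<^sub>m (l+s)) $$ (0,0) * R 1 n = R 1 (n + int l + int s)"
      using T00[of n "l+s"] by (simp add: algebra_simps)
    thus "?q l * R 1 (n + int l + int s) = ?q l * ((?T ^\<^sub>m (l + s)) $$ (0,0) * R 1 n)" by simp
  qed
  also have "\<dots> = (\<Sum>l\<in>{0..Suc r}. \<Sum>i\<in>{0..<Suc r}. ?q l * (?T ^\<^sub>m l) $$ (0,i) * ((?T ^\<^sub>m s) $$ (i,0) * R 1 n))"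
  proof (rule sum.cong[OF refl])
    fix l
    have "(?T ^\<^sub>m (l + s)) $$ (0,0) = (\<Sum>i\<in>{0..<Suc r}. (?T ^\<^sub>m l) $$ (0,i) * (?T ^\<^sub>m s) $$ (i,0))"
      unfolding pow_add by (simp add: scalar_prod_def)
    thus "?q l * ((?T ^\<^sub>m (l + s)) $$ (0,0) * R 1 n) = (\<Sum>i\<in>{0..<Suc r}. ?q l * (?T ^\<^sub>m l) $$ (0,i) * ((?T ^\<^sub>m s) $$ (i,0) * R 1 n))"
      by (simp add: sum_distrib_left sum_distrib_right algebra_simps)
  qed
  also have "\<dots> = (\<Sum>i\<in>{0..<Suc r}. Sr n ?q i * ((?T ^\<^sub>m s) $$ (i,0) * R 1 n))"
    unfolding Sr_def sum_distrib_right by (rule sum.swap)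
  also have "\<dots> = 0" by (rule sum.neutral) (simp add: Sr_qc)
  finally show ?thesis .
qed

end


context qsys begin

definition Conf :: "nat set \<Rightarrow> nat \<Rightarrow> nat set set" where
  "Conf V j = {C. hard_particle_config V (G_edges r) C \<and> card C = j}"

definition hp :: "int \<Rightarrow> nat \<Rightarrow> nat \<Rightarrow> 'a" where
  "hp n k j = (\<Sum>C\<in>Conf {1..<2*k} j. \<Prod>i\<in>C. yw R i n)"

lemma edge_form:
  assumes "e \<in> G_edges r"
  shows "\<exists>x y. e = {x,y} \<and> x < y \<and> y \<le> x + 2 \<and> (y = x + 2 \<longrightarrow> even x)"
  using assms unfolding G_edges_def
proof (elim UnE)
  assume "e \<in> {{1, 2}}" thus ?thesis by (intro exI[of _ 1] exI[of _ 2]) auto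
next
  assume "e \<in> {{2 * k, 2 * k + 1} | k. 1 \<le> k \<and> k \<le> r}"
  then obtain k where "e = {2*k, 2*k+1}" by auto
  thus ?thesis by (intro exI[of _ "2*k"] exI[of _ "2*k+1"]) auto
next
  assume "e \<in> {{2 * k - 2, 2 * k} | k. 2 \<le> k \<and> k \<le> r}"
  then obtain k where "e = {2*k-2, 2*k}" "2 \<le> k" by auto
  thus ?thesis by (intro exI[of _ "2*k-2"] exI[of _ "2*k"]) auto
next
  assume "e \<in> {{2 * k - 1, 2 * k} | k. 2 \<le> k \<and> k \<le> r}"
  then obtain k where "e = {2*k-1, 2*k}" "2 \<le> k" by auto
  thus ?thesis by (intro exI[of _ "2*k-1"] exI[of _ "2*k"]) auto
qed

lemma E1: "1 \<le> k \<Longrightarrow> k \<le> r \<Longrightarrow> {2*k, 2*k+1} \<in> G_edges r"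
  unfolding G_edges_def by blast
lemma E2: "1 \<le> k \<Longrightarrow> k \<le> r \<Longrightarrow> {2*k-1, 2*k} \<in> G_edges r"
proof -
  assume k: "1 \<le> k" "k \<le> r"
  show ?thesis
  proof (cases "k = 1")
    case True thus ?thesis unfolding G_edges_def by simp
  next
    case False
    hence "2 \<le> k" using k by simp
    hence "{2*k-1, 2*k} \<in> {{2 * k - 1, 2 * k} |k. 2 \<le> k \<and> k \<le> r}" using k by blast
    thus ?thesis unfolding G_edges_def by blast
  qed
qed
lemma E3: "2 \<le> k \<Longrightarrow> k \<le> r \<Longrightarrow> {2*k-2, 2*k} \<in> G_edges r"
  unfolding G_edges_def by blast

lemma indep_insert:
  assumes C: "hard_particle_config V (G_edges r) C"
    and far: "\<And>z. z \<in> C \<Longrightarrow> z + 2 < v \<or> (z + 2 = v \<and> odd z)"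
    and v: "v \<in> V'" and VV: "V \<subseteq> V'"
  shows "hard_particle_config V' (G_edges r) (insert v C)"
  unfolding hard_particle_config_def
proof (intro conjI ballI)
  show "insert v C \<subseteq> V'" using C v VV by (auto simp: hard_particle_config_def)
next
  fix e assume e: "e \<in> G_edges r"
  obtain x y where xy: "e = {x,y}" "x < y" "y \<le> x + 2" "y = x + 2 \<longrightarrow> even x"
    using edge_form[OF e] by blast
  show "\<not> e \<subseteq> insert v C"
  proof
    assume sub: "e \<subseteq> insert v C"
    show False
    proof (cases "v \<in> e")
      case False
      hence "e \<subseteq> C" using sub by auto
      thus False using C e by (auto simp: hard_particle_config_def)
    next
      case True
      then consider "v = x" | "v = y" using xy by auto
      thus False
      proof cases
        case 1
        hence "y \<in> C" using sub xy by auto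
        thus False using far[of y] 1 xy by auto
      next
        case 2
        hence "x \<in> C" using sub xy by auto
        thus False using far[of x] 2 xy by auto
      qed
    qed
  qed
qed

lemma Conf_finite: "finite V \<Longrightarrow> finite (Conf V j)"
  by (rule finite_subset[of _ "Pow V"]) (auto simp: Conf_def hard_particle_config_def)

lemma sub_helper: "C \<subseteq> {1..<Suc (Suc m)} \<Longrightarrow> Suc m \<notin> C \<Longrightarrow> m \<notin> C \<Longrightarrow> C \<subseteq> {1..<m}"
  by (auto simp: subset_iff less_Suc_eq)

lemma Conf_split:
  assumes k: "1 \<le> k" "k \<le> r"
  shows "Conf {1..<2*Suc k} (Suc J) = Conf {1..<2*k} (Suc J) \<union> insert (2*k+1) ` Conf {1..<2*k} J
           \<union> insert (2*k) ` Conf {1..<2*(k-1)} J"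
  (is "?L = ?A \<union> ?B \<union> ?C")
proof
  show "?L \<subseteq> ?A \<union> ?B \<union> ?C"
  proof
    fix C assume "C \<in> ?L"
    hence hC: "hard_particle_config {1..<2*Suc k} (G_edges r) C" and cC: "card C = Suc J"
      by (auto simp: Conf_def)
    have CV: "C \<subseteq> {1..<2*Suc k}" using hC by (simp add: hard_particle_config_def)
    have fin: "finite C" using CV finite_subset by blast
    have ind: "\<And>e. e \<in> G_edges r \<Longrightarrow> \<not> e \<subseteq> C" using hC by (simp add: hard_particle_config_def)
    have sub_hp: "\<And>D W. D \<subseteq> C \<Longrightarrow> D \<subseteq> W \<Longrightarrow> hard_particle_config W (G_edges r) D"
      unfolding hard_particle_config_def using ind by (meson subset_trans)
    show "C \<in> ?A \<union> ?B \<union> ?C"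
    proof (cases "2*k+1 \<in> C")
      case True
      have "2*k \<notin> C" using ind[OF E1[OF k]] True by auto
      have "C - {2*k+1} \<subseteq> {1..<Suc (Suc (2*k))}" using CV by auto
      hence D: "C - {2*k+1} \<subseteq> {1..<2*k}" using sub_helper[of "C - {2*k+1}" "2*k"] \<open>2*k \<notin> C\<close> by auto
      have "C - {2*k+1} \<in> Conf {1..<2*k} J"
        using sub_hp[OF _ D] cC fin True by (auto simp: Conf_def)
      moreover have "C = insert (2*k+1) (C - {2*k+1})" using True by auto
      ultimately show ?thesis by blast
    next
      case False
      note na = False
      show ?thesis
      proof (cases "2*k \<in> C")
        case True
        obtain k' where k': "k = Suc k'" using k by (cases k) auto
        have "2*k-1 \<notin> C" using ind[OF E2[OF k]] True by auto
        hence n1: "Suc (2*k') \<notin> C" using k' by simp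
        have n2: "2*k' \<notin> C"
        proof (cases "k' = 0")
          case True thus ?thesis using CV by auto
        next
          case False thus ?thesis using ind[OF E3, of k] k k' \<open>2*k \<in> C\<close> by auto
        qed
        have "C - {2*k} \<subseteq> {1..<Suc (Suc (2*k))}" using CV by auto
        hence "C - {2*k} \<subseteq> {1..<2*k}" using sub_helper[of "C - {2*k}" "2*k"] na by auto
        hence "C - {2*k} \<subseteq> {1..<Suc (Suc (2*k'))}" using k' by simp
        hence D: "C - {2*k} \<subseteq> {1..<2*(k-1)}" using n1 n2 k' sub_helper[of "C - {2*k}" "2*k'"] by auto
        have "C - {2*k} \<in> Conf {1..<2*(k-1)} J"
          using sub_hp[OF _ D] cC fin True by (auto simp: Conf_def)
        moreover have "C = insert (2*k) (C - {2*k})" using True by auto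
        ultimately show ?thesis by blast
      next
        case False
        moreover have "C \<subseteq> {1..<Suc (Suc (2*k))}" using CV by auto
        ultimately have "C \<subseteq> {1..<2*k}" using sub_helper[of C "2*k"] na by auto
        hence "C \<in> ?A" using sub_hp[of C] cC by (auto simp: Conf_def)
        thus ?thesis by blast
      qed
    qed
  qed
next
  show "?A \<union> ?B \<union> ?C \<subseteq> ?L"
  proof (intro Un_least subsetI)
    fix C assume "C \<in> ?A"
    thus "C \<in> ?L" by (auto simp: Conf_def hard_particle_config_def)
  next
    fix C assume "C \<in> ?B"
    then obtain D where D: "D \<in> Conf {1..<2*k} J" "C = insert (2*k+1) D" by auto
    have DV: "D \<subseteq> {1..<2*k}" using D by (auto simp: Conf_def hard_particle_config_def)
    have fD: "finite D" using DV finite_subset by blast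
    have far: "z + 2 < 2*k+1 \<or> (z + 2 = 2*k+1 \<and> odd z)" if "z \<in> D" for z
    proof -
      have "z < 2*k" using that DV by auto
      thus ?thesis by presburger
    qed
    have "hard_particle_config {1..<2*Suc k} (G_edges r) C"
      unfolding D(2)
      by (rule indep_insert[of "{1..<2*k}"]) (use D DV far in \<open>auto simp: Conf_def\<close>)
    moreover have "2*k+1 \<notin> D" using DV by auto
    hence "card C = Suc J" using D fD by (auto simp: Conf_def)
    ultimately show "C \<in> ?L" by (simp add: Conf_def)
  next
    fix C assume "C \<in> ?C"
    then obtain D where D: "D \<in> Conf {1..<2*(k-1)} J" "C = insert (2*k) D" by auto
    have DV: "D \<subseteq> {1..<2*(k-1)}" using D by (auto simp: Conf_def hard_particle_config_def)
    have fD: "finite D" using DV finite_subset by blast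
    have far: "z + 2 < 2*k" if "z \<in> D" for z
    proof -
      have "z < 2*(k-1)" using that DV by auto
      thus ?thesis by presburger
    qed
    have "hard_particle_config {1..<2*Suc k} (G_edges r) C"
      unfolding D(2)
      by (rule indep_insert[of "{1..<2*(k-1)}"]) (use D DV k far in \<open>auto simp: Conf_def\<close>)
    moreover have "2*k \<notin> D" using DV by (auto simp: subset_iff)
    hence "card C = Suc J" using D fD by (auto simp: Conf_def)
    ultimately show "C \<in> ?L" by (simp add: Conf_def)
  qed
qed

lemma hp_rec:
  assumes k: "1 \<le> k" "k \<le> r"
  shows "hp n (Suc k) (Suc J) = hp n k (Suc J) + yw R (2*k+1) n * hp n k J + yw R (2*k) n * hp n (k-1) J"
proof -
  let ?w = "\<lambda>C. \<Prod>i\<in>C. yw R i n"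
  let ?A = "Conf {1..<2*k} (Suc J)" and ?B = "insert (2*k+1) ` Conf {1..<2*k} J"
    and ?C = "insert (2*k) ` Conf {1..<2*(k-1)} J"
  have fA: "finite ?A" and fB: "finite ?B" and fC: "finite ?C" by (auto intro: Conf_finite)
  have sub1: "D \<subseteq> {1..<2*k}" if "D \<in> Conf {1..<2*k} j" for D j
    using that by (auto simp: Conf_def hard_particle_config_def)
  have sub0: "D \<subseteq> {1..<2*(k-1)}" if "D \<in> Conf {1..<2*(k-1)} j" for D j
    using that by (auto simp: Conf_def hard_particle_config_def)
  have dAB: "?A \<inter> ?B = {}"
  proof -
    have "2*k+1 \<in> X" if "X \<in> ?B" for X using that by auto
    moreover have "2*k+1 \<notin> X" if "X \<in> ?A" for X
      using sub1[OF that] by auto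
    ultimately show ?thesis by blast
  qed
  have dABC: "(?A \<union> ?B) \<inter> ?C = {}"
  proof -
    have "2*k \<in> X" if "X \<in> ?C" for X using that by auto
    moreover have "2*k \<notin> X" if "X \<in> ?A \<union> ?B" for X
      using that sub1 by (auto simp: subset_iff)
    ultimately show ?thesis by blast
  qed
  have injB: "inj_on (insert (2*k+1)) (Conf {1..<2*k} J)"
  proof (rule inj_onI)
    fix X Y assume "X \<in> Conf {1..<2*k} J" "Y \<in> Conf {1..<2*k} J" "insert (2*k+1) X = insert (2*k+1) Y"
    moreover have "2*k+1 \<notin> X" "2*k+1 \<notin> Y" using sub1[OF calculation(1)] sub1[OF calculation(2)] by auto
    ultimately show "X = Y" by (metis insert_ident)
  qed
  have injC: "inj_on (insert (2*k)) (Conf {1..<2*(k-1)} J)"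
  proof (rule inj_onI)
    fix X Y assume "X \<in> Conf {1..<2*(k-1)} J" "Y \<in> Conf {1..<2*(k-1)} J" "insert (2*k) X = insert (2*k) Y"
    moreover have "2*k \<notin> {1..<2*(k-1)}" by auto
    moreover have "2*k \<notin> X" "2*k \<notin> Y" using sub0[OF calculation(1)] sub0[OF calculation(2)] calculation(4) by blast+
    ultimately show "X = Y" by (metis insert_ident)
  qed
  have sB: "sum ?w ?B = yw R (2*k+1) n * hp n k J"
  proof -
    have "sum ?w ?B = (\<Sum>D\<in>Conf {1..<2*k} J. ?w (insert (2*k+1) D))"
      by (rule sum.reindex[OF injB, unfolded comp_def])
    also have "\<dots> = (\<Sum>D\<in>Conf {1..<2*k} J. yw R (2*k+1) n * ?w D)"
    proof (rule sum.cong[OF refl])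
      fix D assume D: "D \<in> Conf {1..<2*k} J"
      have "finite D" using sub1[OF D] finite_subset by blast
      moreover have "2*k+1 \<notin> D" using sub1[OF D] by auto
      ultimately show "?w (insert (2*k+1) D) = yw R (2*k+1) n * ?w D" by simp
    qed
    finally show ?thesis by (simp add: hp_def sum_distrib_left)
  qed
  have sC: "sum ?w ?C = yw R (2*k) n * hp n (k-1) J"
  proof -
    have "sum ?w ?C = (\<Sum>D\<in>Conf {1..<2*(k-1)} J. ?w (insert (2*k) D))"
      by (rule sum.reindex[OF injC, unfolded comp_def])
    also have "\<dots> = (\<Sum>D\<in>Conf {1..<2*(k-1)} J. yw R (2*k) n * ?w D)"
    proof (rule sum.cong[OF refl])
      fix D assume D: "D \<in> Conf {1..<2*(k-1)} J"
      have "finite D" using sub0[OF D] finite_subset by blast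
      moreover have "2*k \<notin> D" using sub0[OF D] by (auto simp: subset_iff)
      ultimately show "?w (insert (2*k) D) = yw R (2*k) n * ?w D" by simp
    qed
    finally show ?thesis by (simp add: hp_def sum_distrib_left)
  qed
  have "hp n (Suc k) (Suc J) = sum ?w (?A \<union> ?B \<union> ?C)"
    unfolding hp_def Conf_split[OF k] ..
  also have "\<dots> = sum ?w (?A \<union> ?B) + sum ?w ?C"
    by (rule sum.union_disjoint) (use fA fB fC dABC in auto)
  also have "sum ?w (?A \<union> ?B) = sum ?w ?A + sum ?w ?B"
    by (rule sum.union_disjoint) (use fA fB dAB in auto)
  finally show ?thesis unfolding sB sC by (simp add: hp_def)
qed

lemma empty_not_edge: "{} \<notin> G_edges r"
  using edge_form[of "{}"] by auto

lemma hp0: "hp n 0 j = (if j = 0 then 1 else 0)"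
proof -
  have "Conf {1..<2*0} j = (if j = 0 then {{}} else {})"
    using empty_not_edge by (auto simp: Conf_def hard_particle_config_def)
  thus ?thesis by (simp add: hp_def)
qed

lemma hp1: "hp n (Suc 0) j = (if j = 0 then 1 else if j = 1 then yw R 1 n else 0)"
proof -
  have ind1: "hard_particle_config {1} (G_edges r) {1}"
    unfolding hard_particle_config_def
  proof (intro conjI ballI)
    fix e assume "e \<in> G_edges r"
    then obtain x y where "e = {x,y}" "x < y" using edge_form by blast
    thus "\<not> e \<subseteq> {1}" by auto
  qed simp
  have ind0: "hard_particle_config {1} (G_edges r) {}"
    using empty_not_edge by (auto simp: hard_particle_config_def)
  have V1: "{1..<2*1} = {1::nat}" by auto
  have mem: "C \<in> Conf {1..<2*1} j \<longleftrightarrow> (C = {} \<and> j = 0) \<or> (C = {1} \<and> j = 1)" for C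
  proof
    assume "C \<in> Conf {1..<2*1} j"
    hence "C \<subseteq> {1}" "card C = j" by (auto simp: Conf_def hard_particle_config_def)
    thus "(C = {} \<and> j = 0) \<or> (C = {1} \<and> j = 1)" by (auto simp: subset_singleton_iff)
  next
    assume "(C = {} \<and> j = 0) \<or> (C = {1} \<and> j = 1)"
    thus "C \<in> Conf {1..<2*1} j" unfolding V1 using ind0 ind1 by (auto simp: Conf_def)
  qed
  have "Conf {1..<2*1} j = (if j = 0 then {{}} else if j = 1 then {{1}} else {})"
    using mem by auto
  thus ?thesis by (simp add: hp_def)
qed

lemma hp_bound: "k < j \<Longrightarrow> k \<le> Suc r \<Longrightarrow> hp n k j = 0"
proof (induction k arbitrary: j rule: less_induct)
  case (less k)
  show ?case
  proof (cases k)
    case 0 thus ?thesis using less.prems by (simp add: hp0)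
  next
    case (Suc k1)
    show ?thesis
    proof (cases k1)
      case 0 thus ?thesis using less.prems Suc by (simp add: hp1)
    next
      case (Suc k2)
      obtain J where J: "j = Suc J" using less.prems by (cases j) auto
      have "hp n k j = hp n k1 (Suc J) + yw R (2*k1+1) n * hp n k1 J + yw R (2*k1) n * hp n (k1-1) J"
        unfolding \<open>k = Suc k1\<close> J by (rule hp_rec) (use less.prems \<open>k = Suc k1\<close> Suc in auto)
      also have "\<dots> = 0" using less.IH[of k1] less.IH[of "k1-1"] less.prems \<open>k = Suc k1\<close> Suc J by simp
      finally show ?thesis .
    qed
  qed
qed

lemma hp_zero: "hp n k 0 = 1"
proof -
  have "Conf {1..<2*k} 0 = {{}}"
  proof -
    have "C \<in> Conf {1..<2*k} 0 \<longleftrightarrow> C = {}" for C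
    proof
      assume "C \<in> Conf {1..<2*k} 0"
      hence "C \<subseteq> {1..<2*k}" "card C = 0" by (auto simp: Conf_def hard_particle_config_def)
      thus "C = {}" using finite_subset by fastforce
    next
      assume "C = {}" thus "C \<in> Conf {1..<2*k} 0"
        using empty_not_edge by (auto simp: Conf_def hard_particle_config_def)
    qed
    thus ?thesis by auto
  qed
  thus ?thesis by (simp add: hp_def)
qed

lemma qc_hp:
  "k \<le> Suc r \<Longrightarrow> qc (dd n) (ee n) (Suc k) l = (if l \<le> k then (-1)^(k-l) * hp n k (k-l) else 0)"
proof (induction k arbitrary: l rule: less_induct)
  case (less k)
  show ?case
  proof (cases "k < l")
    case True thus ?thesis by (simp add: qc_deg)
  next
    case False
    hence lk: "l \<le> k" by simp
    show ?thesis
    proof (cases k)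
      case 0 thus ?thesis using lk by (simp add: qc.simps hp_zero)
    next
      case (Suc k')
      have IH1: "qc (dd n) (ee n) (Suc k') m = (if m \<le> k' then (-1)^(k'-m) * hp n k' (k'-m) else 0)" for m
        using less.IH[of k'] less.prems Suc by simp
      have rec: "qc (dd n) (ee n) (Suc k) l = (if l = 0 then 0 else qc (dd n) (ee n) (Suc k') (l - 1))
          - dd n k' * qc (dd n) (ee n) (Suc k') l - ee n k' * (if l = 0 then 0 else qc (dd n) (ee n) k' (l - 1))"
        unfolding Suc by (simp add: qc.simps)
      show ?thesis
      proof (cases "l = k")
        case True
        have "qc (dd n) (ee n) k' (l-1) = 0" by (rule qc_deg) (use True Suc in simp)
        thus ?thesis using rec True Suc by (simp add: IH1 hp_zero qc_deg)
      next
        case False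
        hence lk': "l \<le> k'" using lk Suc by simp
        define J where "J = k' - l"
        have kl: "k - l = Suc J" using lk' Suc J_def by simp
        have sgn: "(-1::'a)^(Suc J) = - ((-1)^J)" by simp
        show ?thesis
        proof (cases k')
          case 0
          hence "l = 0" using lk' by simp
          thus ?thesis using rec Suc 0 by (simp add: IH1 qc.simps hp1 hp0 dd_def)
        next
          case (Suc k2)
          have k'1: "1 \<le> k'" "k' \<le> r" using Suc \<open>k = Suc k'\<close> less.prems by auto
          have IH0: "qc (dd n) (ee n) k' m = (if m \<le> k2 then (-1)^(k2-m) * hp n k2 (k2-m) else 0)" for m
            using less.IH[of k2] less.prems Suc \<open>k = Suc k'\<close> by simp
          have hr: "hp n (Suc k') (Suc J) = hp n k' (Suc J) + yw R (2*k'+1) n * hp n k' J + yw R (2*k') n * hp n (k'-1) J"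
            by (rule hp_rec[OF k'1])
          have e: "ee n k' = yw R (2*k') n" using k'1 by (simp add: ee_def)
          have d: "dd n k' = yw R (2*k'+1) n" by (simp add: dd_def)
          have t1: "(if l = 0 then 0 else qc (dd n) (ee n) (Suc k') (l - 1)) = - ((-1)^J * hp n k' (Suc J))"
          proof (cases "l = 0")
            case True
            have "hp n k' (Suc J) = 0" by (rule hp_bound) (use True J_def k'1 in auto)
            thus ?thesis using True by simp
          next
            case False
            hence "k' - (l - 1) = Suc J" using lk' J_def by simp
            thus ?thesis using False lk' by (simp add: IH1)
          qed
          have t2: "qc (dd n) (ee n) (Suc k') l = (-1)^J * hp n k' J" using lk' by (simp add: IH1 J_def)
          have t3: "(if l = 0 then 0 else qc (dd n) (ee n) k' (l - 1)) = (-1)^J * hp n (k'-1) J"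
          proof (cases "l = 0")
            case True
            have "hp n (k'-1) J = 0" by (rule hp_bound) (use True J_def k'1 in auto)
            thus ?thesis using True by simp
          next
            case False
            hence j2: "k2 - (l - 1) = J" "l - 1 \<le> k2" using lk' J_def Suc by auto
            have "qc (dd n) (ee n) k' (l - 1) = (-1)^(k2 - (l-1)) * hp n k2 (k2 - (l-1))"
              using IH0[of "l-1"] j2(2) by simp
            thus ?thesis using False Suc unfolding j2(1) by simp
          qed
          have "qc (dd n) (ee n) (Suc k) l = - ((-1)^J * hp n k' (Suc J)) - dd n k' * ((-1)^J * hp n k' J) - ee n k' * ((-1)^J * hp n (k'-1) J)"
            using rec t1 t2 t3 by simp
          also have "\<dots> = (-1)^(k-l) * hp n k (k-l)"
          proof -
            have kl': "Suc k' - l = Suc J" using kl \<open>k = Suc k'\<close> by simp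
            show ?thesis unfolding \<open>k = Suc k'\<close> kl' hr e d sgn by (simp add: algebra_simps)
          qed
          finally show ?thesis using lk by simp
        qed
      qed
    qed
  qed
qed

end


context qsys begin

definition Zs :: "int \<Rightarrow> nat \<Rightarrow> 'a" where
  "Zs n j = Z_hp (G_vertices r) (G_edges r) j (\<lambda>v. yw R v n)"

lemma Zs_hp: "Zs n j = hp n (Suc r) j"
proof -
  have "G_vertices r = {1..<2 * Suc r}" by (auto simp: G_vertices_def)
  thus ?thesis by (simp add: Zs_def Z_hp_def hp_def Conf_def)
qed

lemma Z_rec: "(\<Sum>k\<in>{0..r+1}. (-1)^k * Zs n k * R 1 (n + int (r+1) + int s - int k)) = 0"
proof -
  have "0 = (\<Sum>l\<in>{0..Suc r}. qc (dd n) (ee n) (Suc (Suc r)) l * R 1 (n + int l + int s))"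
    using lin_rec[of n s] by simp
  also have "\<dots> = (\<Sum>k\<in>{0..Suc r}. qc (dd n) (ee n) (Suc (Suc r)) (Suc r - k) * R 1 (n + int (Suc r - k) + int s))"
    by (subst sum.atLeastAtMost_rev) simp
  also have "\<dots> = (\<Sum>k\<in>{0..r+1}. (-1)^k * Zs n k * R 1 (n + int (r+1) + int s - int k))"
  proof (rule sum.cong)
    fix k assume k: "k \<in> {0..r+1}"
    have "qc (dd n) (ee n) (Suc (Suc r)) (Suc r - k) = (-1)^k * hp n (Suc r) k"
      using qc_hp[of "Suc r" n "Suc r - k"] k by simp
    moreover have "n + int (Suc r - k) + int s = n + int (r+1) + int s - int k" using k by auto
    hence "R 1 (n + int (Suc r - k) + int s) = R 1 (n + int (r+1) + int s - int k)" by (rule arg_cong)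
    ultimately show "qc (dd n) (ee n) (Suc (Suc r)) (Suc r - k) * R 1 (n + int (Suc r - k) + int s)
        = (-1)^k * Zs n k * R 1 (n + int (r+1) + int s - int k)" by (simp add: Zs_hp)
  qed simp
  finally show ?thesis by simp
qed

lemma Zs0: "Zs n 0 = 1" by (simp add: Zs_hp hp_zero)

lemma hank_one: "det (hank (R 1) (r+1) (m - int r - 1)) = 1"
proof -
  have "det (hank (R 1) (r+1) ((m - 1) - int (r+1) + 1)) = R (r+1) (m-1)"
    by (rule hank_Q[OF Q]) simp
  moreover have "(m - 1) - int (r+1) + 1 = m - int r - 1" by simp
  ultimately show ?thesis by simp
qed

lemma cons0: "cons_qty r R 0 m = 1"
proof -
  have "mat_delete (bigM r R m) (r+1) (r+1) = hank (R 1) (r+1) (m - int r - 1)"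
    by (rule eq_matI) (auto simp: bigM_def hank_def mat_delete_def algebra_simps)
  thus ?thesis using hank_one[of m] by (simp add: cons_qty_bigM)
qed

lemma cons_Zs: "k \<le> r + 1 \<Longrightarrow> cons_qty r R k m = Zs (m - int r - 1) k"
proof (rule hank_unique[of "R 1" r m])
  show "det (hank (R 1) (r+1) (m - int r - 1)) \<noteq> 0" using hank_one by simp
  show "cons_qty r R 0 m = Zs (m - int r - 1) 0" by (simp add: cons0 Zs0)
  show "(\<Sum>k\<in>{0..r+1}. (-1)^k * cons_qty r R k m * R 1 (m + int i - int k)) = 0" if "i \<le> r" for i
    by (rule cons_rec[OF that])
  show "(\<Sum>k\<in>{0..r+1}. (-1)^k * Zs (m - int r - 1) k * R 1 (m + int i - int k)) = 0" if "i \<le> r" for i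
  proof -
    have "(\<Sum>k\<in>{0..r+1}. (-1)^k * Zs (m - int r - 1) k * R 1 ((m - int r - 1) + int (r+1) + int i - int k)) = 0"
      by (rule Z_rec)
    thus ?thesis by simp
  qed
qed

lemma Zs_step: "k \<le> r + 1 \<Longrightarrow> Zs n k = Zs (n+1) k"
proof (rule hank_unique[of "R 1" r "n + int r + 2"])
  show "det (hank (R 1) (r+1) (n + int r + 2 - int r - 1)) \<noteq> 0" using hank_one[of "n + int r + 2"] by simp
  show "Zs n 0 = Zs (n+1) 0" by (simp add: Zs0)
  show "(\<Sum>k\<in>{0..r+1}. (-1)^k * Zs n k * R 1 (n + int r + 2 + int i - int k)) = 0" if "i \<le> r" for i
  proof -
    have "(\<Sum>k\<in>{0..r+1}. (-1)^k * Zs n k * R 1 (n + int (r+1) + int (Suc i) - int k)) = 0"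
      by (rule Z_rec)
    thus ?thesis by (simp add: algebra_simps)
  qed
  show "(\<Sum>k\<in>{0..r+1}. (-1)^k * Zs (n+1) k * R 1 (n + int r + 2 + int i - int k)) = 0" if "i \<le> r" for i
  proof -
    have "(\<Sum>k\<in>{0..r+1}. (-1)^k * Zs (n+1) k * R 1 ((n+1) + int (r+1) + int i - int k)) = 0"
      by (rule Z_rec)
    thus ?thesis by (simp add: algebra_simps)
  qed
qed

lemma Zs_const: "k \<le> r + 1 \<Longrightarrow> Zs n k = Zs 0 k"
proof (induction n rule: int_induct[where k = 0])
  case base thus ?case by simp
next
  case (step1 i) thus ?case using Zs_step[of k i] by simp
next
  case (step2 i) thus ?case using Zs_step[of k "i - 1"] by simp
qed

lemma main: "\<forall>n m :: int. \<forall>j\<in>{0..r + 1}. cons_qty r R j m = Z_hp (G_vertices r) (G_edges r) j (\<lambda>v. yw R v n)"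
proof (intro allI ballI)
  fix n m :: int and j assume "j \<in> {0..r+1}"
  hence j: "j \<le> r + 1" by simp
  have "cons_qty r R j m = Zs (m - int r - 1) j" by (rule cons_Zs[OF j])
  also have "\<dots> = Zs n j" using Zs_const[OF j, of "m - int r - 1"] Zs_const[OF j, of n] by simp
  finally show "cons_qty r R j m = Z_hp (G_vertices r) (G_edges r) j (\<lambda>v. yw R v n)" by (simp add: Zs_def)
qed

end

theorem mainTheorem6:
  fixes r :: nat and R :: "nat \<Rightarrow> int \<Rightarrow> 'a::field_char_0"
  assumes "r \<ge> 1"
    and "is_Q_system r R"
    and "alg_indep_rat ({1..r} \<times> {0, 1}) (\<lambda>(\<alpha>, m). R \<alpha> m)"
  shows "\<forall>n m :: int. \<forall>j\<in>{0..r + 1}.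
           cons_qty r R j m = Z_hp (G_vertices r) (G_edges r) j (\<lambda>v. yw R v n)"
proof -
  interpret qsys r R by unfold_locales (use assms in auto)
  show ?thesis by (rule main)
qed


end
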